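(* Let $\mu\in\mathsf{Form}_{\mathcal L}$ and let $\mathcal M=(S,E,\mathrm{Val})$ be a playable $Ł_n$-model. If $\mathcal M^*=(|S|,E^*,\mathrm{Val}^* )$ is an intermediate $\mathrm{Cl}(\mu)$-filtration of $\mathcal M$, then for every $u\in S$ the restriction $E^*(|u|)^\sharp$ of $E^*(|u|)$ to $\mathcal P N\times Ł_1^{|S|}$ is a playable Boolean effectivity function.
   Context: $Ł_n=\{0,\frac1n,\dots,1\}$ with $\neg x=1-x$, $x\oplus y=\min(x+y,1)$, $x\odot y=\max(x+y-1,0)$, $x\to y=\min(1,1-x+y)$, $\wedge=\min$, $\vee=\max$, applied pointwise to functions; $Ł_1^X=\{0,1\}^X$. $N$ is a finite set of players, $|N|\ge2$, $\overline C=N\setminus C$. An $Ł_n$-valued effectivity function on a set $X$ is a map $E:\mathcal P N\times Ł_n^X\to Ł_n$ (Boolean when $n=1$). It is: outcome monotonic if $f\ge g$ implies $E(C,f)\ge E(C,g)$; $N$-maximal if $\neg E(\varnothing,\neg f)\le E(N,f)$; superadditive if $E(C_1,f)\wedge E(C_2,g)\le E(C_1\cup C_2,f\wedge g)$ whenever $C_1\cap C_2=\varnothing$; homogeneous if $E(C,f\oplus f)=E(C,f)\oplus E(C,f)$ and $E(C,f\odot f)=E(C,f)\odot E(C,f)$; has liveness if $E(C,1)=1$ for all $C$; has safety if $E(C,0)=0$ for all $C$. Playable: all six properties. Formulas of $\mathcal L$: $\phi::=1\mid p\mid\phi\to\phi\mid\neg\phi\mid[C]\phi$ ($p$ in a countably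 infinite set $\mathsf{Prop}$, $C\subseteq N$); $\mathsf{Form}_{\mathcal L}$ is the set of formulas; abbreviations $0=\neg1$, $\phi\oplus\psi=\neg\phi\to\psi$, $\phi\odot\psi=\neg(\phi\to\neg\psi)$, $\phi\wedge\psi=\phi\odot(\phi\to\psi)$. $\mathrm{Cl}(\mu)$ is the closure of the set of subformulas of $\mu$ under $\neg$ and $\to$. An $Ł_n$-model $(S,E,\mathrm{Val})$: $S\ne\varnothing$, $E(u)$ an $Ł_n$-valued effectivity function on $S$ for each $u$, $\mathrm{Val}:S\times\mathsf{Prop}\to Ł_n$ extended by the Łukasiewicz operations and $\mathrm{Val}(u,[C]\phi)=E(u)(C,\mathrm{Val}(-,\phi))$; it is playable if every $E(u)$ is playable. For $\Gamma$ a set of formulas closed under subformulas and $\phi\mapsto\phi\oplus\phi$, $\phi\mapsto\phi\odot\phi$: $u\equiv_\Gamma v$ iff $\mathrm{Val}(u,\phi)=\mathrm{Val}(v,\phi)$ for all $\phi\in\Gamma$; $|S|$ is the set of classes; $|\mathrm{Val}(-,\phi)|(|u|)=\mathrm{Val}(u,\phi)$. A $\Gamma$-filtration is an $Ł_n$-model $(|S|,E^*,\mathrm{Val}^* )$ with $\mathrm{Val}^*(|u|,p)=\mathrm{Val}(u,p)$ for $p\in\Gamma$ and $E(u)(C,\mathrm{Val}(-,\phi))=E^*(|u|)(C,|\mathrm{Val}(-,\phi)|)$ for all $C$, $\phi\in\Gamma$. It is an intermediate $\Gamma$-filtration of a playable $\mathcal M$ if moreover, for every $u$, $f\in Ł_n^{|S|}$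 and proper coalition $C\ne N$, $E^*(|u|)(C,f)=\max\{E(u)(C,\mathrm{Val}(-,\phi))\mid\phi\in\Gamma,\ |\mathrm{Val}(-,\phi)|\le f\}$, and $E^*(|u|)(N,f)=\neg E^*(|u|)(\varnothing,\neg f)$. *)

theory Defs
  imports Complex_Main "HOL-Library.FuncSet"
begin

text \<open>The chain L_n = {0, 1/n, ..., 1} as a set of reals (n >= 1).
  Functions X -> L_n are represented extensionally (value undefined outside X).\<close>

definition luk :: "nat \<Rightarrow> real set" where
  "luk n = {real k / real n | k. k \<le> n}"

definition lfun :: "nat \<Rightarrow> 'x set \<Rightarrow> ('x \<Rightarrow> real) set" where
  "lfun n X = X \<rightarrow>\<^sub>E luk n"

definition lneg :: "'x set \<Rightarrow> ('x \<Rightarrow> real) \<Rightarrow> ('x \<Rightarrow> real)" where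
  "lneg X f = restrict (\<lambda>x. 1 - f x) X"

definition loplus :: "'x set \<Rightarrow> ('x \<Rightarrow> real) \<Rightarrow> ('x \<Rightarrow> real) \<Rightarrow> ('x \<Rightarrow> real)" where
  "loplus X f g = restrict (\<lambda>x. min (f x + g x) 1) X"

definition lodot :: "'x set \<Rightarrow> ('x \<Rightarrow> real) \<Rightarrow> ('x \<Rightarrow> real) \<Rightarrow> ('x \<Rightarrow> real)" where
  "lodot X f g = restrict (\<lambda>x. max (f x + g x - 1) 0) X"

definition lmin :: "'x set \<Rightarrow> ('x \<Rightarrow> real) \<Rightarrow> ('x \<Rightarrow> real) \<Rightarrow> ('x \<Rightarrow> real)" where
  "lmin X f g = restrict (\<lambda>x. min (f x) (g x)) X"

definition lconst :: "'x set \<Rightarrow> real \<Rightarrow> ('x \<Rightarrow> real)" where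
  "lconst X c = restrict (\<lambda>_. c) X"

definition vop :: "real \<Rightarrow> real \<Rightarrow> real" where
  "vop a b = min (a + b) 1"

definition vodot :: "real \<Rightarrow> real \<Rightarrow> real" where
  "vodot a b = max (a + b - 1) 0"

text \<open>Players: a finite type 'a, N = UNIV, coalitions = 'a set.
  An L_n-valued effectivity function on X: E :: 'a set => (X -> L_n) => L_n.\<close>

definition eff_fun :: "nat \<Rightarrow> 'x set \<Rightarrow> ('a set \<Rightarrow> ('x \<Rightarrow> real) \<Rightarrow> real) \<Rightarrow> bool" where
  "eff_fun n X E \<longleftrightarrow> (\<forall>C. \<forall>f\<in>lfun n X. E C f \<in> luk n)"

definition outcome_monotonic :: "nat \<Rightarrow> 'x set \<Rightarrow> ('a set \<Rightarrow> ('x \<Rightarrow> real) \<Rightarrow> real) \<Rightarrow> bool" where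
  "outcome_monotonic n X E \<longleftrightarrow>
     (\<forall>C. \<forall>f\<in>lfun n X. \<forall>g\<in>lfun n X. (\<forall>x\<in>X. g x \<le> f x) \<longrightarrow> E C g \<le> E C f)"

definition N_maximal :: "nat \<Rightarrow> 'x set \<Rightarrow> ('a set \<Rightarrow> ('x \<Rightarrow> real) \<Rightarrow> real) \<Rightarrow> bool" where
  "N_maximal n X E \<longleftrightarrow> (\<forall>f\<in>lfun n X. 1 - E {} (lneg X f) \<le> E UNIV f)"

definition superadditive :: "nat \<Rightarrow> 'x set \<Rightarrow> ('a set \<Rightarrow> ('x \<Rightarrow> real) \<Rightarrow> real) \<Rightarrow> bool" where
  "superadditive n X E \<longleftrightarrow>
     (\<forall>C1 C2. \<forall>f\<in>lfun n X. \<forall>g\<in>lfun n X. C1 \<inter> C2 = {} \<longrightarrow>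
        min (E C1 f) (E C2 g) \<le> E (C1 \<union> C2) (lmin X f g))"

definition homogeneous :: "nat \<Rightarrow> 'x set \<Rightarrow> ('a set \<Rightarrow> ('x \<Rightarrow> real) \<Rightarrow> real) \<Rightarrow> bool" where
  "homogeneous n X E \<longleftrightarrow>
     (\<forall>C. \<forall>f\<in>lfun n X. E C (loplus X f f) = vop (E C f) (E C f)
                      \<and> E C (lodot X f f) = vodot (E C f) (E C f))"

definition liveness :: "'x set \<Rightarrow> ('a set \<Rightarrow> ('x \<Rightarrow> real) \<Rightarrow> real) \<Rightarrow> bool" where
  "liveness X E \<longleftrightarrow> (\<forall>C. E C (lconst X 1) = 1)"

definition safety :: "'x set \<Rightarrow> ('a set \<Rightarrow> ('x \<Rightarrow> real) \<Rightarrow> real) \<Rightarrow> bool" where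
  "safety X E \<longleftrightarrow> (\<forall>C. E C (lconst X 0) = 0)"

text \<open>For n = 1 this is a playable
  Boolean effectivity function; since every clause only inspects arguments in
  lfun 1 X = {0,1}^X, "playable 1 X E" is exactly the statement that the
  restriction of E to P N x L_1^X is a playable Boolean effectivity function.\<close>

definition playable :: "nat \<Rightarrow> 'x set \<Rightarrow> ('a set \<Rightarrow> ('x \<Rightarrow> real) \<Rightarrow> real) \<Rightarrow> bool" where
  "playable n X E \<longleftrightarrow> eff_fun n X E \<and> outcome_monotonic n X E \<and> N_maximal n X E
     \<and> superadditive n X E \<and> homogeneous n X E \<and> liveness X E \<and> safety X E"

datatype 'a form = FOne | FVar nat | FImp "'a form" "'a form" | FNeg "'a form"
  | FBox "'a set" "'a form"

fun subformulas :: "'a form \<Rightarrow> 'a form set" where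
  "subformulas FOne = {FOne}"
| "subformulas (FVar p) = {FVar p}"
| "subformulas (FImp a b) = insert (FImp a b) (subformulas a \<union> subformulas b)"
| "subformulas (FNeg a) = insert (FNeg a) (subformulas a)"
| "subformulas (FBox C a) = insert (FBox C a) (subformulas a)"

inductive_set Cl :: "'a form \<Rightarrow> 'a form set" for \<mu> where
  sub: "\<phi> \<in> subformulas \<mu> \<Longrightarrow> \<phi> \<in> Cl \<mu>"
| neg: "\<phi> \<in> Cl \<mu> \<Longrightarrow> FNeg \<phi> \<in> Cl \<mu>"
| imp: "\<phi> \<in> Cl \<mu> \<Longrightarrow> \<psi> \<in> Cl \<mu> \<Longrightarrow> FImp \<phi> \<psi> \<in> Cl \<mu>"

fun eval :: "'s set \<Rightarrow> ('s \<Rightarrow> 'a set \<Rightarrow> ('s \<Rightarrow> real) \<Rightarrow> real) \<Rightarrow> ('s \<Rightarrow> nat \<Rightarrow> real)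
    \<Rightarrow> 's \<Rightarrow> 'a form \<Rightarrow> real" where
  "eval S E V u FOne = 1"
| "eval S E V u (FVar p) = V u p"
| "eval S E V u (FImp a b) = min 1 (1 - eval S E V u a + eval S E V u b)"
| "eval S E V u (FNeg a) = 1 - eval S E V u a"
| "eval S E V u (FBox C a) = E u C (restrict (\<lambda>v. eval S E V v a) S)"

definition is_model :: "nat \<Rightarrow> 's set \<Rightarrow> ('s \<Rightarrow> 'a set \<Rightarrow> ('s \<Rightarrow> real) \<Rightarrow> real)
    \<Rightarrow> ('s \<Rightarrow> nat \<Rightarrow> real) \<Rightarrow> bool" where
  "is_model n S E V \<longleftrightarrow> S \<noteq> {} \<and> (\<forall>u\<in>S. eff_fun n S (E u)) \<and> (\<forall>u\<in>S. \<forall>p. V u p \<in> luk n)"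

definition playable_model :: "nat \<Rightarrow> 's set \<Rightarrow> ('s \<Rightarrow> 'a set \<Rightarrow> ('s \<Rightarrow> real) \<Rightarrow> real)
    \<Rightarrow> ('s \<Rightarrow> nat \<Rightarrow> real) \<Rightarrow> bool" where
  "playable_model n S E V \<longleftrightarrow> is_model n S E V \<and> (\<forall>u\<in>S. playable n S (E u))"

definition cls :: "'a form set \<Rightarrow> 's set \<Rightarrow> ('s \<Rightarrow> 'a set \<Rightarrow> ('s \<Rightarrow> real) \<Rightarrow> real)
    \<Rightarrow> ('s \<Rightarrow> nat \<Rightarrow> real) \<Rightarrow> 's \<Rightarrow> 's set" where
  "cls \<Gamma> S E V u = {v \<in> S. \<forall>\<phi>\<in>\<Gamma>. eval S E V u \<phi> = eval S E V v \<phi>}"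

definition qstates :: "'a form set \<Rightarrow> 's set \<Rightarrow> ('s \<Rightarrow> 'a set \<Rightarrow> ('s \<Rightarrow> real) \<Rightarrow> real)
    \<Rightarrow> ('s \<Rightarrow> nat \<Rightarrow> real) \<Rightarrow> 's set set" where
  "qstates \<Gamma> S E V = cls \<Gamma> S E V ` S"

definition liftval :: "'a form set \<Rightarrow> 's set \<Rightarrow> ('s \<Rightarrow> 'a set \<Rightarrow> ('s \<Rightarrow> real) \<Rightarrow> real)
    \<Rightarrow> ('s \<Rightarrow> nat \<Rightarrow> real) \<Rightarrow> 'a form \<Rightarrow> ('s set \<Rightarrow> real)" where
  "liftval \<Gamma> S E V \<phi> = restrict (\<lambda>c. eval S E V (SOME u. u \<in> c) \<phi>) (qstates \<Gamma> S E V)"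

definition filtration :: "nat \<Rightarrow> 'a form set \<Rightarrow> 's set \<Rightarrow> ('s \<Rightarrow> 'a set \<Rightarrow> ('s \<Rightarrow> real) \<Rightarrow> real)
    \<Rightarrow> ('s \<Rightarrow> nat \<Rightarrow> real)
    \<Rightarrow> ('s set \<Rightarrow> 'a set \<Rightarrow> ('s set \<Rightarrow> real) \<Rightarrow> real) \<Rightarrow> ('s set \<Rightarrow> nat \<Rightarrow> real) \<Rightarrow> bool" where
  "filtration n \<Gamma> S E V Es Vs \<longleftrightarrow>
     is_model n (qstates \<Gamma> S E V) Es Vs
   \<and> (\<forall>u\<in>S. \<forall>p. FVar p \<in> \<Gamma> \<longrightarrow> Vs (cls \<Gamma> S E V u) p = V u p)
   \<and> (\<forall>u\<in>S. \<forall>C. \<forall>\<phi>\<in>\<Gamma>.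
        E u C (restrict (\<lambda>v. eval S E V v \<phi>) S) = Es (cls \<Gamma> S E V u) C (liftval \<Gamma> S E V \<phi>))"

definition intermediate_filtration :: "nat \<Rightarrow> 'a form set \<Rightarrow> 's set
    \<Rightarrow> ('s \<Rightarrow> 'a set \<Rightarrow> ('s \<Rightarrow> real) \<Rightarrow> real) \<Rightarrow> ('s \<Rightarrow> nat \<Rightarrow> real)
    \<Rightarrow> ('s set \<Rightarrow> 'a set \<Rightarrow> ('s set \<Rightarrow> real) \<Rightarrow> real) \<Rightarrow> ('s set \<Rightarrow> nat \<Rightarrow> real) \<Rightarrow> bool" where
  "intermediate_filtration n \<Gamma> S E V Es Vs \<longleftrightarrow>
     playable_model n S E V
   \<and> filtration n \<Gamma> S E V Es Vs
   \<and> (\<forall>u\<in>S. \<forall>f\<in>lfun n (qstates \<Gamma> S E V). \<forall>C. C \<noteq> UNIV \<longrightarrow>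
        Es (cls \<Gamma> S E V u) C f =
          Max {E u C (restrict (\<lambda>v. eval S E V v \<phi>) S) | \<phi>.
                 \<phi> \<in> \<Gamma> \<and> (\<forall>c\<in>qstates \<Gamma> S E V. liftval \<Gamma> S E V \<phi> c \<le> f c)})
   \<and> (\<forall>u\<in>S. \<forall>f\<in>lfun n (qstates \<Gamma> S E V).
        Es (cls \<Gamma> S E V u) UNIV f = 1 - Es (cls \<Gamma> S E V u) {} (lneg (qstates \<Gamma> S E V) f))"

end

theory Submission
  imports Defs
begin

lemma luk_range: "n \<ge> 1 \<Longrightarrow> x \<in> luk n \<Longrightarrow> 0 \<le> x \<and> x \<le> 1"
  by (auto simp: luk_def)

lemma luk_pos: "n \<ge> 1 \<Longrightarrow> x \<in> luk n \<Longrightarrow> x > 0 \<Longrightarrow> x \<ge> 1 / real n"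
proof -
  assume a: "n \<ge> 1" "x \<in> luk n" "x > 0"
  then obtain k where k: "k \<le> n" "x = real k / real n" by (auto simp: luk_def)
  with a have "k \<ge> 1" by (cases k) auto
  hence "real 1 \<le> real k" by linarith
  thus ?thesis using k by (simp add: divide_right_mono)
qed

lemma luk_neg: assumes "n \<ge> 1" "x \<in> luk n" shows "1 - x \<in> luk n"
proof -
  obtain k where k: "k \<le> n" "x = real k / real n" using assms by (auto simp: luk_def)
  have "1 - x = real (n - k) / real n" using k assms by (simp add: of_nat_diff field_simps)
  thus ?thesis unfolding luk_def by auto
qed

lemma luk_imp: assumes "n \<ge> 1" "x \<in> luk n" "y \<in> luk n" shows "min 1 (1 - x + y) \<in> luk n"
proof -
  obtain k where k: "k \<le> n" "x = real k / real n" using assms by (auto simp: luk_def)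
  obtain j where j: "j \<le> n" "y = real j / real n" using assms by (auto simp: luk_def)
  show ?thesis
  proof (cases "k \<le> j")
    case True
    hence "x \<le> y" using k j by (simp add: divide_right_mono)
    hence "min 1 (1 - x + y) = real n / real n" using assms by simp
    thus ?thesis unfolding luk_def by auto
  next
    case False
    hence "y < x" using k j assms by (simp add: divide_strict_right_mono)
    hence "min 1 (1 - x + y) = 1 - x + y" by simp
    also have "\<dots> = real (n - k + j) / real n" using k j assms False
      by (simp add: of_nat_diff field_simps)
    finally have "min 1 (1 - x + y) = real (n - k + j) / real n" .
    moreover have "n - k + j \<le> n" using False k by simp
    ultimately show ?thesis unfolding luk_def by blast
  qed
qed

lemma luk_0: "0 \<in> luk n" unfolding luk_def by force
lemma luk_1: "n \<ge> 1 \<Longrightarrow> 1 \<in> luk n" unfolding luk_def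
  by (rule CollectI, rule exI[of _ n]) simp
lemma luk1: "luk 1 = {0, 1}" unfolding luk_def by (auto simp: le_Suc_eq)
lemma luk1': "luk (Suc 0) = {0, 1}" using luk1 by simp
lemma luk_finite: "finite (luk n)"
proof -
  have "luk n = (\<lambda>k. real k / real n) ` {..n}" unfolding luk_def by auto
  thus ?thesis by simp
qed

lemma eval_luk:
  assumes n: "n \<ge> 1" and M: "is_model n S E V"
  shows "w \<in> S \<Longrightarrow> eval S E V w \<phi> \<in> luk n"
proof (induction \<phi> arbitrary: w)
  case FOne then show ?case using luk_1 n by simp
next
  case (FVar p) then show ?case using M by (simp add: is_model_def)
next
  case (FImp a b) then show ?case using luk_imp n by simp
next
  case (FNeg a) then show ?case using luk_neg n by simp
next
  case (FBox C a)
  have "restrict (\<lambda>v. eval S E V v a) S \<in> lfun n S" using FBox.IH by (auto simp: lfun_def)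
  then show ?case using M FBox.prems by (auto simp: is_model_def eff_fun_def)
qed

definition dbl :: "'a form \<Rightarrow> 'a form" where "dbl \<phi> = FImp (FNeg \<phi>) \<phi>"
definition fcnj :: "'a form \<Rightarrow> 'a form \<Rightarrow> 'a form" where
  "fcnj \<phi> \<psi> = FNeg (FImp \<phi> (FNeg (FImp \<phi> \<psi>)))"

lemma eval_dbl: "eval S E V w (dbl \<phi>) = min (eval S E V w \<phi> + eval S E V w \<phi>) 1"
  by (simp add: dbl_def min.commute)

lemma dbl_step: "0 \<le> (a::real) \<Longrightarrow> min (min (2^k*a) 1 + min (2^k*a) 1) 1 = min (2^Suc k * a) 1"
  by (auto simp: min_def)

lemma eval_dbl_pow: "0 \<le> eval S E V w \<phi> \<Longrightarrow> eval S E V w \<phi> \<le> 1 \<Longrightarrow>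
   eval S E V w ((dbl^^k) \<phi>) = min (2^k * eval S E V w \<phi>) 1"
proof (induction k)
  case 0 
  then show ?case by simp
next
  case (Suc k)
  then show ?case using dbl_step[of "eval S E V w \<phi>" k] by (simp add: eval_dbl)
qed

lemma eval_cnj: "0 \<le> eval S E V w \<psi> \<Longrightarrow> 0 \<le> eval S E V w \<phi> \<Longrightarrow>
   eval S E V w (fcnj \<phi> \<psi>) = min (eval S E V w \<phi>) (eval S E V w \<psi>)"
  by (auto simp: fcnj_def min_def)


locale fsetup =
  fixes n :: nat and \<Gamma> :: "'a form set" and S :: "'s set"
    and E :: "'s \<Rightarrow> 'a set \<Rightarrow> ('s \<Rightarrow> real) \<Rightarrow> real"
    and V :: "'s \<Rightarrow> nat \<Rightarrow> real"
    and Es :: "'s set \<Rightarrow> 'a set \<Rightarrow> ('s set \<Rightarrow> real) \<Rightarrow> real"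
    and Vs :: "'s set \<Rightarrow> nat \<Rightarrow> real" and u :: 's and \<phi>0 :: "'a form"
  assumes n1: "n \<ge> 1" and IF: "intermediate_filtration n \<Gamma> S E V Es Vs" and uS: "u \<in> S"
    and \<phi>0: "\<phi>0 \<in> \<Gamma>" and negC: "\<And>\<phi>. \<phi> \<in> \<Gamma> \<Longrightarrow> FNeg \<phi> \<in> \<Gamma>"
    and impC: "\<And>\<phi> \<psi>. \<phi> \<in> \<Gamma> \<Longrightarrow> \<psi> \<in> \<Gamma> \<Longrightarrow> FImp \<phi> \<psi> \<in> \<Gamma>"
begin

abbreviation Q where "Q \<equiv> qstates \<Gamma> S E V"
abbreviation cu where "cu \<equiv> cls \<Gamma> S E V u"
abbreviation cl where "cl v \<equiv> cls \<Gamma> S E V v"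
abbreviation ev where "ev w \<phi> \<equiv> eval S E V w \<phi>"
abbreviation val where "val \<phi> \<equiv> restrict (\<lambda>v. eval S E V v \<phi>) S"
abbreviation lift where "lift \<phi> \<equiv> liftval \<Gamma> S E V \<phi>"

definition A where "A C f = {E u C (val \<phi>) | \<phi>. \<phi> \<in> \<Gamma> \<and> (\<forall>c\<in>Q. lift \<phi> c \<le> f c)}"

lemma PM: "playable_model n S E V" using IF by (simp add: intermediate_filtration_def)
lemma model: "is_model n S E V" using PM by (simp add: playable_model_def)
lemma PE: "playable n S (E u)" using PM uS by (simp add: playable_model_def)

lemma ev_luk: "w \<in> S \<Longrightarrow> ev w \<phi> \<in> luk n" using eval_luk[OF n1 model] .
lemma ev_01: "w \<in> S \<Longrightarrow> 0 \<le> ev w \<phi> \<and> ev w \<phi> \<le> 1" using ev_luk luk_range n1 by blast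
lemma val_lfun: "val \<phi> \<in> lfun n S" using ev_luk by (auto simp: lfun_def)
lemma eu_luk: "E u C (val \<phi>) \<in> luk n"
  using PE val_lfun by (auto simp: playable_def eff_fun_def)
lemma eu_01: "0 \<le> E u C (val \<phi>) \<and> E u C (val \<phi>) \<le> 1" using eu_luk luk_range n1 by blast

lemma cl_Q: "v \<in> S \<Longrightarrow> cl v \<in> Q" by (simp add: qstates_def)

lemma lift_eq: assumes "v \<in> S" "\<phi> \<in> \<Gamma>" shows "lift \<phi> (cl v) = ev v \<phi>"
proof -
  have vin: "v \<in> cl v" using assms by (simp add: cls_def)
  hence "(SOME w. w \<in> cl v) \<in> cl v" by (rule someI)
  hence "ev v \<phi> = ev (SOME w. w \<in> cl v) \<phi>" using assms by (simp add: cls_def)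
  thus ?thesis using cl_Q[OF assms(1)] by (simp add: liftval_def)
qed

lemma lift_le_iff: "\<phi> \<in> \<Gamma> \<Longrightarrow> (\<forall>c\<in>Q. lift \<phi> c \<le> f c) \<longleftrightarrow> (\<forall>v\<in>S. ev v \<phi> \<le> f (cl v))"
  by (auto simp: qstates_def lift_eq)

lemma A_alt: "A C f = {E u C (val \<phi>) | \<phi>. \<phi> \<in> \<Gamma> \<and> (\<forall>v\<in>S. ev v \<phi> \<le> f (cl v))}"
  unfolding A_def using lift_le_iff by blast

lemma Es_Max: "C \<noteq> UNIV \<Longrightarrow> f \<in> lfun n Q \<Longrightarrow> Es cu C f = Max (A C f)"
  using IF uS unfolding intermediate_filtration_def A_def by blast

lemma Es_UNIV: "f \<in> lfun n Q \<Longrightarrow> Es cu UNIV f = 1 - Es cu {} (lneg Q f)"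
  using IF uS unfolding intermediate_filtration_def by blast

lemma lfun1: "f \<in> lfun 1 Q \<Longrightarrow> f \<in> lfun n Q"
  using luk_0[of n] luk_1[OF n1] unfolding lfun_def luk1' One_nat_def PiE_def Pi_def by auto

lemma lfun1_val: "f \<in> lfun 1 Q \<Longrightarrow> x \<in> Q \<Longrightarrow> f x = 0 \<or> f x = 1"
  by (auto simp: lfun_def luk1 luk1')

lemma lneg_lfun1: "f \<in> lfun 1 Q \<Longrightarrow> lneg Q f \<in> lfun 1 Q"
  by (auto simp: lfun_def luk1 luk1' lneg_def)
lemma lmin_lfun1: "f \<in> lfun 1 Q \<Longrightarrow> g \<in> lfun 1 Q \<Longrightarrow> lmin Q f g \<in> lfun 1 Q"
  by (auto simp: lfun_def luk1 luk1' lmin_def PiE_def Pi_def min_def)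
lemma lconst_lfun1: "lconst Q 0 \<in> lfun 1 Q" "lconst Q 1 \<in> lfun 1 Q"
  by (auto simp: lfun_def luk1 luk1' lconst_def)

lemma A_fin: "finite (A C f)"
proof -
  have "A C f \<subseteq> luk n" unfolding A_def using eu_luk by auto
  thus ?thesis using luk_finite finite_subset by blast
qed

definition z where "z = FNeg (FImp \<phi>0 \<phi>0)"
definition one where "one = FImp \<phi>0 \<phi>0"
lemma z_in: "z \<in> \<Gamma>" using \<phi>0 negC impC by (simp add: z_def)
lemma one_in: "one \<in> \<Gamma>" using \<phi>0 impC by (simp add: one_def)
lemma ev_z: "ev w z = 0" by (simp add: z_def)
lemma ev_one: "ev w one = 1" by (simp add: one_def)
lemma val_z: "val z = lconst S 0" by (simp add: ev_z lconst_def)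
lemma val_one: "val one = lconst S 1" by (simp add: ev_one lconst_def)

lemma A_ne: assumes "f \<in> lfun 1 Q" shows "A C f \<noteq> {}"
proof -
  have "\<forall>v\<in>S. ev v z \<le> f (cl v)" using lfun1_val[OF assms] cl_Q ev_z by force
  thus ?thesis unfolding A_alt using z_in by blast
qed

lemma Es_ge: assumes "C \<noteq> UNIV" "f \<in> lfun 1 Q" "\<phi> \<in> \<Gamma>" "\<forall>v\<in>S. ev v \<phi> \<le> f (cl v)"
  shows "E u C (val \<phi>) \<le> Es cu C f"
proof -
  have "E u C (val \<phi>) \<in> A C f" unfolding A_alt using assms by blast
  thus ?thesis using Es_Max[OF assms(1) lfun1[OF assms(2)]] A_fin by simp
qed

lemma Es_in: assumes "C \<noteq> UNIV" "f \<in> lfun 1 Q"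
  shows "\<exists>\<phi>\<in>\<Gamma>. (\<forall>v\<in>S. ev v \<phi> \<le> f (cl v)) \<and> Es cu C f = E u C (val \<phi>)"
proof -
  have "Max (A C f) \<in> A C f" using A_fin A_ne[OF assms(2)] by (rule Max_in)
  thus ?thesis using Es_Max[OF assms(1) lfun1[OF assms(2)]] unfolding A_alt by auto
qed

lemma dbl_in: "\<phi> \<in> \<Gamma> \<Longrightarrow> (dbl^^k) \<phi> \<in> \<Gamma>"
  by (induction k) (auto simp: dbl_def negC impC)

lemma val_dbl: "val (dbl \<phi>) = loplus S (val \<phi>) (val \<phi>)"
  unfolding loplus_def by (rule restrict_ext) (simp add: eval_dbl)

lemma eu_dbl_pow: "E u C (val ((dbl^^k) \<phi>)) = min (2^k * E u C (val \<phi>)) 1"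
proof (induction k)
  case 0 then show ?case using eu_01[of C \<phi>] by (metis funpow_0 mult_1 power_0 min.absorb1)
next
  case (Suc k)
  have "E u C (val ((dbl^^Suc k) \<phi>)) = E u C (loplus S (val ((dbl^^k) \<phi>)) (val ((dbl^^k) \<phi>)))"
    by (simp add: val_dbl)
  also have "\<dots> = vop (E u C (val ((dbl^^k) \<phi>))) (E u C (val ((dbl^^k) \<phi>)))"
    using PE val_lfun by (simp add: playable_def homogeneous_def)
  also have "\<dots> = min (min (2^k * E u C (val \<phi>)) 1 + min (2^k * E u C (val \<phi>)) 1) 1"
    unfolding vop_def Suc.IH ..
  also have "\<dots> = min (2^Suc k * E u C (val \<phi>)) 1"
    using dbl_step[of "E u C (val \<phi>)" k] eu_01 by blast
  finally show ?case .
qed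

lemma pow_ge: "real n \<le> 2 ^ n"
proof -
  have "n < 2^n" by (rule less_exp)
  hence "real n \<le> real (2^n)" by linarith
  thus ?thesis by simp
qed

lemma Es_bool: assumes "C \<noteq> UNIV" "f \<in> lfun 1 Q"
  shows "Es cu C f = 0 \<or> Es cu C f = 1"
proof -
  obtain \<phi> where \<phi>: "\<phi> \<in> \<Gamma>" "\<forall>v\<in>S. ev v \<phi> \<le> f (cl v)" "Es cu C f = E u C (val \<phi>)"
    using Es_in[OF assms] by blast
  show ?thesis
  proof (cases "E u C (val \<phi>) = 0")
    case True then show ?thesis using \<phi> by simp
  next
    case False
    let ?x = "E u C (val \<phi>)"
    have "?x > 0" using False eu_01[of C \<phi>] by linarith
    hence x1: "?x \<ge> 1 / real n" using luk_pos[OF n1 eu_luk] by blast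
    have "1 = real n * (1 / real n)" using n1 by simp
    also have "\<dots> \<le> 2^n * ?x" using x1 pow_ge
      by (meson mult_mono of_nat_0_le_iff order_trans zero_le_divide_1_iff)
    finally have "min (2^n * ?x) 1 = 1" by simp
    hence e1: "E u C (val ((dbl^^n) \<phi>)) = 1" by (simp add: eu_dbl_pow)
    have "\<forall>v\<in>S. ev v ((dbl^^n) \<phi>) \<le> f (cl v)"
    proof
      fix v assume v: "v \<in> S"
      have ev: "ev v ((dbl^^n) \<phi>) = min (2^n * ev v \<phi>) 1" using eval_dbl_pow[of S E V v \<phi> n] ev_01[OF v, of \<phi>] by simp
      from lfun1_val[OF assms(2) cl_Q[OF v]] show "ev v ((dbl^^n) \<phi>) \<le> f (cl v)"
      proof
        assume "f (cl v) = 0"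
        hence "ev v \<phi> = 0" using \<phi>(2) v ev_01[OF v, of \<phi>] by force
        thus ?thesis using ev \<open>f (cl v) = 0\<close> by simp
      next
        assume "f (cl v) = 1" thus ?thesis using ev by simp
      qed
    qed
    hence "1 \<le> Es cu C f" using Es_ge[OF assms dbl_in[OF \<phi>(1)]] e1 by metis
    thus ?thesis using \<phi>(3) eu_01[of C \<phi>] by simp
  qed
qed

end

context fsetup
begin

lemma Es_bool_all: assumes "f \<in> lfun 1 Q" shows "Es cu C f = 0 \<or> Es cu C f = 1"
proof (cases "C = UNIV")
  case True
  have "Es cu {} (lneg Q f) = 0 \<or> Es cu {} (lneg Q f) = 1"
    using Es_bool[OF _ lneg_lfun1[OF assms]] by simp
  then show ?thesis using True Es_UNIV[OF lfun1[OF assms]] by auto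
next
  case False then show ?thesis using Es_bool[OF _ assms] by simp
qed

lemma Es_zero: assumes "C \<noteq> UNIV" "f \<in> lfun 1 Q" "Es cu C f = 0" "\<phi> \<in> \<Gamma>"
  "\<forall>v\<in>S. ev v \<phi> \<le> f (cl v)" shows "E u C (val \<phi>) = 0"
  using Es_ge[OF assms(1,2,4,5)] assms(3) eu_01[of C \<phi>] by simp

lemma cnj_in: "\<phi> \<in> \<Gamma> \<Longrightarrow> \<psi> \<in> \<Gamma> \<Longrightarrow> fcnj \<phi> \<psi> \<in> \<Gamma>"
  by (simp add: fcnj_def negC impC)

lemma ev_cnj: "v \<in> S \<Longrightarrow> ev v (fcnj \<phi> \<psi>) = min (ev v \<phi>) (ev v \<psi>)"
proof -
  assume v: "v \<in> S"
  show ?thesis using eval_cnj[of S E V v \<psi> \<phi>] ev_01[OF v, of \<phi>] ev_01[OF v, of \<psi>] by simp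
qed

lemma val_cnj: "val (fcnj \<phi> \<psi>) = lmin S (val \<phi>) (val \<psi>)"
  unfolding lmin_def by (rule restrict_ext) (simp add: ev_cnj)

lemma superadd_E: assumes "C1 \<inter> C2 = {}"
  shows "min (E u C1 (val \<phi>)) (E u C2 (val \<psi>)) \<le> E u (C1 \<union> C2) (val (fcnj \<phi> \<psi>))"
  using PE val_lfun assms unfolding playable_def superadditive_def val_cnj by blast

lemma Es_mono: assumes "C \<noteq> UNIV" "f \<in> lfun 1 Q" "g \<in> lfun 1 Q" "\<forall>x\<in>Q. g x \<le> f x"
  shows "Es cu C g \<le> Es cu C f"
proof -
  have "A C g \<subseteq> A C f" unfolding A_alt using assms(4) cl_Q by fastforce
  hence "Max (A C g) \<le> Max (A C f)" using A_ne[OF assms(3)] A_fin by (rule Max_mono)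
  thus ?thesis using Es_Max[OF assms(1)] lfun1 assms(2,3) by simp
qed

lemma lneg_at: "x \<in> Q \<Longrightarrow> lneg Q f x = 1 - f x" by (simp add: lneg_def)
lemma lmin_at: "x \<in> Q \<Longrightarrow> lmin Q f g x = min (f x) (g x)" by (simp add: lmin_def)

lemma eff: "eff_fun 1 Q (Es cu)"
  unfolding eff_fun_def luk1 using Es_bool_all by blast

lemma mono: "outcome_monotonic 1 Q (Es cu)"
  unfolding outcome_monotonic_def
proof (intro allI ballI impI)
  fix C f g assume f: "f \<in> lfun 1 Q" and g: "g \<in> lfun 1 Q" and le: "\<forall>x\<in>Q. g x \<le> f x"
  show "Es cu C g \<le> Es cu C f"
  proof (cases "C = UNIV")
    case True
    have "Es cu {} (lneg Q f) \<le> Es cu {} (lneg Q g)"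
      using Es_mono[OF _ lneg_lfun1[OF g] lneg_lfun1[OF f]] le lneg_at by simp
    then show ?thesis using True Es_UNIV lfun1 f g by simp
  next
    case False then show ?thesis using Es_mono f g le by blast
  qed
qed

lemma nmax: "N_maximal 1 Q (Es cu)"
  unfolding N_maximal_def using Es_UNIV lfun1 by simp

lemma fix_loplus: "f \<in> lfun 1 Q \<Longrightarrow> loplus Q f f = f"
  by (rule ext) (auto simp: loplus_def lfun_def luk1' PiE_def Pi_def extensional_def)
lemma fix_lodot: "f \<in> lfun 1 Q \<Longrightarrow> lodot Q f f = f"
  by (rule ext) (auto simp: lodot_def lfun_def luk1' PiE_def Pi_def extensional_def)

lemma homog: "homogeneous 1 Q (Es cu)"
  unfolding homogeneous_def
proof (intro allI ballI)
  fix C f assume f: "f \<in> lfun 1 Q"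
  have "Es cu C f = 0 \<or> Es cu C f = 1" using Es_bool_all[OF f] .
  then show "Es cu C (loplus Q f f) = vop (Es cu C f) (Es cu C f) \<and>
        Es cu C (lodot Q f f) = vodot (Es cu C f) (Es cu C f)"
    using fix_loplus[OF f] fix_lodot[OF f] by (auto simp: vop_def vodot_def)
qed

lemma safety_proper: assumes "C \<noteq> UNIV" shows "Es cu C (lconst Q 0) = 0"
proof (rule ccontr)
  assume "Es cu C (lconst Q 0) \<noteq> 0"
  hence "Es cu C (lconst Q 0) = 1" using Es_bool[OF assms lconst_lfun1(1)] by blast
  then obtain \<phi> where \<phi>: "\<phi> \<in> \<Gamma>" "\<forall>v\<in>S. ev v \<phi> \<le> lconst Q 0 (cl v)" "E u C (val \<phi>) = 1"
    using Es_in[OF assms lconst_lfun1(1)] by auto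
  have "val \<phi> = lconst S 0" unfolding lconst_def
  proof (rule restrict_ext)
    fix v assume v: "v \<in> S"
    have "ev v \<phi> \<le> lconst Q 0 (cl v)" using \<phi>(2) v by blast
    hence "ev v \<phi> \<le> 0" using cl_Q[OF v] by (simp add: lconst_def)
    thus "ev v \<phi> = 0" using ev_01[OF v, of \<phi>] by simp
  qed
  hence "E u C (val \<phi>) = 0" using PE by (simp add: playable_def safety_def)
  thus False using \<phi>(3) by simp
qed

lemma live_proper: assumes "C \<noteq> UNIV" shows "Es cu C (lconst Q 1) = 1"
proof -
  have "\<forall>v\<in>S. ev v one \<le> lconst Q 1 (cl v)" using cl_Q by (simp add: lconst_def ev_one)
  hence "E u C (val one) \<le> Es cu C (lconst Q 1)" using Es_ge[OF assms lconst_lfun1(2) one_in] by blast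
  moreover have "E u C (val one) = 1" using PE val_one by (simp add: playable_def liveness_def)
  ultimately show ?thesis using Es_bool[OF assms lconst_lfun1(2)] by auto
qed

lemma lneg_c1: "lneg Q (lconst Q 1) = lconst Q 0"
  unfolding lneg_def lconst_def by (rule restrict_ext) simp
lemma lneg_c0: "lneg Q (lconst Q 0) = lconst Q 1"
  unfolding lneg_def lconst_def by (rule restrict_ext) simp

lemma live: "liveness Q (Es cu)"
  unfolding liveness_def
proof
  fix C show "Es cu C (lconst Q 1) = 1"
  proof (cases "C = UNIV")
    case True
    then show ?thesis using Es_UNIV[OF lfun1[OF lconst_lfun1(2)]] lneg_c1 safety_proper[of "{}"] by simp
  qed (rule live_proper)
qed

lemma safe: "safety Q (Es cu)"
  unfolding safety_def
proof
  fix C show "Es cu C (lconst Q 0) = 0"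
  proof (cases "C = UNIV")
    case True
    then show ?thesis using Es_UNIV[OF lfun1[OF lconst_lfun1(1)]] lneg_c0 live_proper[of "{}"] by simp
  qed (rule safety_proper)
qed


lemma Es_one: assumes "C \<noteq> UNIV" "f \<in> lfun 1 Q" "Es cu C f = 1"
  obtains \<phi> where "\<phi> \<in> \<Gamma>" "\<forall>v\<in>S. ev v \<phi> \<le> f (cl v)" "E u C (val \<phi>) = 1"
  using Es_in[OF assms(1,2)] assms(3) by auto

lemma superadd: "superadditive 1 Q (Es cu)"
  unfolding superadditive_def
proof (intro allI ballI impI)
  fix C1 C2 :: "'a set" and f g assume f: "f \<in> lfun 1 Q" and g: "g \<in> lfun 1 Q" and dj: "C1 \<inter> C2 = {}"
  let ?h = "lmin Q f g"
  have h: "?h \<in> lfun 1 Q" using lmin_lfun1[OF f g] .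
  have fv: "\<And>v. v \<in> S \<Longrightarrow> f (cl v) = 0 \<or> f (cl v) = 1" using lfun1_val[OF f] cl_Q by blast
  have gv: "\<And>v. v \<in> S \<Longrightarrow> g (cl v) = 0 \<or> g (cl v) = 1" using lfun1_val[OF g] cl_Q by blast
  have hv: "\<And>v. v \<in> S \<Longrightarrow> ?h (cl v) = min (f (cl v)) (g (cl v))" using lmin_at cl_Q by blast
  have key: "Es cu C1 f = 1 \<Longrightarrow> Es cu C2 g = 1 \<Longrightarrow> Es cu (C1 \<union> C2) ?h = 1"
  proof -
    assume a1: "Es cu C1 f = 1" and a2: "Es cu C2 g = 1"
    show ?thesis
    proof (cases "C1 \<union> C2 = UNIV")
      case False
      hence c1: "C1 \<noteq> UNIV" and c2: "C2 \<noteq> UNIV" by auto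
      obtain \<phi> where \<phi>: "\<phi> \<in> \<Gamma>" "\<forall>v\<in>S. ev v \<phi> \<le> f (cl v)" "E u C1 (val \<phi>) = 1"
        using Es_one[OF c1 f a1] .
      obtain \<psi> where \<psi>: "\<psi> \<in> \<Gamma>" "\<forall>v\<in>S. ev v \<psi> \<le> g (cl v)" "E u C2 (val \<psi>) = 1"
        using Es_one[OF c2 g a2] .
      have "\<forall>v\<in>S. ev v (fcnj \<phi> \<psi>) \<le> ?h (cl v)"
        using \<phi>(2) \<psi>(2) hv ev_cnj by fastforce
      hence "E u (C1 \<union> C2) (val (fcnj \<phi> \<psi>)) \<le> Es cu (C1 \<union> C2) ?h"
        using Es_ge[OF False h cnj_in[OF \<phi>(1) \<psi>(1)]] by blast
      moreover have "1 \<le> E u (C1 \<union> C2) (val (fcnj \<phi> \<psi>))"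
        using superadd_E[OF dj, of \<phi> \<psi>] \<phi>(3) \<psi>(3) by simp
      ultimately show ?thesis using Es_bool[OF False h] by auto
    next
      case True
      have eqU: "Es cu (C1 \<union> C2) ?h = 1 - Es cu {} (lneg Q ?h)"
        using True Es_UNIV[OF lfun1[OF h]] by simp
      have "Es cu {} (lneg Q ?h) = 0"
      proof (rule ccontr)
        assume "Es cu {} (lneg Q ?h) \<noteq> 0"
        hence "Es cu {} (lneg Q ?h) = 1" using Es_bool[OF _ lneg_lfun1[OF h]] by blast
        then obtain \<chi> where \<chi>: "\<chi> \<in> \<Gamma>" "\<forall>v\<in>S. ev v \<chi> \<le> lneg Q ?h (cl v)" "E u {} (val \<chi>) = 1"
          using Es_one[OF _ lneg_lfun1[OF h]] by blast
        have \<chi>v: "\<And>v. v \<in> S \<Longrightarrow> ev v \<chi> \<le> 1 - min (f (cl v)) (g (cl v))"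
          using \<chi>(2) hv lneg_at cl_Q by fastforce
        show False
        proof (cases "C1 = UNIV")
          case c1: True
          hence c2: "C2 = {}" using dj by auto
          have "Es cu {} (lneg Q f) = 0" using a1 c1 Es_UNIV[OF lfun1[OF f]] by simp
          obtain \<psi> where \<psi>: "\<psi> \<in> \<Gamma>" "\<forall>v\<in>S. ev v \<psi> \<le> g (cl v)" "E u {} (val \<psi>) = 1"
            using Es_one[OF _ g] a2 c2 by blast
          have "\<forall>v\<in>S. ev v (fcnj \<psi> \<chi>) \<le> lneg Q f (cl v)"
          proof
            fix v assume v: "v \<in> S"
            show "ev v (fcnj \<psi> \<chi>) \<le> lneg Q f (cl v)"
              using fv[OF v] gv[OF v] \<chi>v[OF v] \<psi>(2) v ev_01[OF v, of \<psi>] ev_01[OF v, of \<chi>]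
                ev_cnj[OF v] lneg_at[OF cl_Q[OF v]] by fastforce
          qed
          hence "E u {} (val (fcnj \<psi> \<chi>)) = 0"
            using Es_zero[OF _ lneg_lfun1[OF f] \<open>Es cu {} (lneg Q f) = 0\<close> cnj_in[OF \<psi>(1) \<chi>(1)]] by blast
          moreover have "min (E u {} (val \<psi>)) (E u {} (val \<chi>)) \<le> E u {} (val (fcnj \<psi> \<chi>))"
            using superadd_E[of "{}" "{}" \<psi> \<chi>] by simp
          ultimately show False using \<psi>(3) \<chi>(3) by simp
        next
          case nc1: False
          show False
          proof (cases "C2 = UNIV")
            case c2: True
            hence c1: "C1 = {}" using dj by auto
            have "Es cu {} (lneg Q g) = 0" using a2 c2 Es_UNIV[OF lfun1[OF g]] by simp
            obtain \<phi> where \<phi>: "\<phi> \<in> \<Gamma>" "\<forall>v\<in>S. ev v \<phi> \<le> f (cl v)" "E u {} (val \<phi>) = 1"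
              using Es_one[OF _ f] a1 c1 by blast
            have "\<forall>v\<in>S. ev v (fcnj \<phi> \<chi>) \<le> lneg Q g (cl v)"
            proof
              fix v assume v: "v \<in> S"
              show "ev v (fcnj \<phi> \<chi>) \<le> lneg Q g (cl v)"
                using fv[OF v] gv[OF v] \<chi>v[OF v] \<phi>(2) v ev_01[OF v, of \<phi>] ev_01[OF v, of \<chi>]
                  ev_cnj[OF v] lneg_at[OF cl_Q[OF v]] by fastforce
            qed
            hence "E u {} (val (fcnj \<phi> \<chi>)) = 0"
              using Es_zero[OF _ lneg_lfun1[OF g] \<open>Es cu {} (lneg Q g) = 0\<close> cnj_in[OF \<phi>(1) \<chi>(1)]] by blast
            moreover have "min (E u {} (val \<phi>)) (E u {} (val \<chi>)) \<le> E u {} (val (fcnj \<phi> \<chi>))"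
              using superadd_E[of "{}" "{}" \<phi> \<chi>] by simp
            ultimately show False using \<phi>(3) \<chi>(3) by simp
          next
            case nc2: False
            obtain \<phi> where \<phi>: "\<phi> \<in> \<Gamma>" "\<forall>v\<in>S. ev v \<phi> \<le> f (cl v)" "E u C1 (val \<phi>) = 1"
              using Es_one[OF nc1 f a1] .
            obtain \<psi> where \<psi>: "\<psi> \<in> \<Gamma>" "\<forall>v\<in>S. ev v \<psi> \<le> g (cl v)" "E u C2 (val \<psi>) = 1"
              using Es_one[OF nc2 g a2] .
            have s1: "1 \<le> E u UNIV (val (fcnj \<phi> \<psi>))"
              using superadd_E[OF dj, of \<phi> \<psi>] \<phi>(3) \<psi>(3) True by simp
            have s2: "min (E u UNIV (val (fcnj \<phi> \<psi>))) (E u {} (val \<chi>))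
                \<le> E u UNIV (val (fcnj (fcnj \<phi> \<psi>) \<chi>))"
              using superadd_E[of UNIV "{}" "fcnj \<phi> \<psi>" \<chi>] by simp
            have "val (fcnj (fcnj \<phi> \<psi>) \<chi>) = lconst S 0" unfolding lconst_def
            proof (rule restrict_ext)
              fix v assume v: "v \<in> S"
              show "ev v (fcnj (fcnj \<phi> \<psi>) \<chi>) = 0"
                using fv[OF v] gv[OF v] \<chi>v[OF v] \<phi>(2) \<psi>(2) v ev_01[OF v, of \<phi>] ev_01[OF v, of \<psi>]
                  ev_01[OF v, of \<chi>] ev_cnj[OF v] by fastforce
            qed
            hence "E u UNIV (val (fcnj (fcnj \<phi> \<psi>) \<chi>)) = 0"
              using PE by (simp add: playable_def safety_def)
            thus False using s1 s2 \<chi>(3) by simp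
          qed
        qed
      qed
      thus ?thesis using eqU by simp
    qed
  qed
  show "min (Es cu C1 f) (Es cu C2 g) \<le> Es cu (C1 \<union> C2) ?h"
    using key Es_bool_all[OF f, of C1] Es_bool_all[OF g, of C2] Es_bool_all[OF h, of "C1 \<union> C2"]
    by auto
qed

lemma playable_Es: "playable 1 Q (Es cu)"
  unfolding playable_def using eff mono nmax superadd homog live safe by blast

end

theorem mainTheorem8:
  fixes n :: nat
    and \<mu> :: "'a::finite form"
    and S :: "'s set"
    and E :: "'s \<Rightarrow> 'a set \<Rightarrow> ('s \<Rightarrow> real) \<Rightarrow> real"
    and V :: "'s \<Rightarrow> nat \<Rightarrow> real"
    and Es :: "'s set \<Rightarrow> 'a set \<Rightarrow> ('s set \<Rightarrow> real) \<Rightarrow> real"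
    and Vs :: "'s set \<Rightarrow> nat \<Rightarrow> real"
  assumes "n \<ge> 1"
    and "card (UNIV :: 'a set) \<ge> 2"
    and "playable_model n S E V"
    and "intermediate_filtration n (Cl \<mu>) S E V Es Vs"
  shows "\<forall>u\<in>S. playable 1 (qstates (Cl \<mu>) S E V) (Es (cls (Cl \<mu>) S E V u))"
proof
  fix u assume u: "u \<in> S"
  have mu: "\<mu> \<in> Cl \<mu>" by (rule Cl.sub) (cases \<mu>; simp)
  interpret fsetup n "Cl \<mu>" S E V Es Vs u \<mu>
    by unfold_locales (use assms u mu Cl.neg Cl.imp in auto)
  show "playable 1 (qstates (Cl \<mu>) S E V) (Es (cls (Cl \<mu>) S E V u))" using playable_Es .
qed

end
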